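(* Let $p\ge 3$ be an odd integer, $\mu>0$ and $\alpha>0$. Let $(x_0,y_0)\in\mathbb{R}^2$ and let $(x,y)\in C^1([0,\infty);\mathbb{R}^2)$ be the global solution of \[ x'(t)=y(t),\qquad y'(t)=-\alpha x(t)^p-\mu y(t),\quad t>0,\qquad x(0)=x_0,\ y(0)=y_0. \] Define \[ \mathcal{E}(t):=\frac12 y(t)^2+\frac{\mu}{2}x(t)y(t)+\frac{\mu^2}{4}x(t)^2+\frac{\alpha}{p+1}x(t)^{p+1}. \] Then there exists a constant $C_\dagger>0$ such that \[ \mathcal{E}(t)\le C_\dagger\, t^{-\frac{2}{p-1}}\quad\text{for all } t>0. \] *)

theory Defs
  imports "HOL-Analysis.Analysis"
begin

definition energy :: "nat \<Rightarrow> real \<Rightarrow> real \<Rightarrow> real \<Rightarrow> real \<Rightarrow> real" where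
  "energy p \<alpha> \<mu> x y = y^2 / 2 + \<mu> / 2 * x * y + \<mu>^2 / 4 * x^2 + \<alpha> / (real p + 1) * x ^ (p + 1)"

end

theory Submission
  imports Defs
begin

lemma energy_alt: "energy p \<alpha> \<mu> x y = (y + \<mu>*x/2)^2/2 + \<mu>^2*x^2/8 + \<alpha>/(real p+1) * x^(p+1)"
  unfolding energy_def by (simp add: power2_eq_square field_simps)

lemma even_pow_nonneg: "even n \<Longrightarrow> (0::real) \<le> x ^ n"
  by (simp add: zero_le_even_power)

lemma energy_bounds:
  fixes x y :: real
  assumes "\<alpha> > 0" "\<mu> > 0" "even (p+1)"
  shows "0 \<le> energy p \<alpha> \<mu> x y" "\<mu>^2*x^2/8 \<le> energy p \<alpha> \<mu> x y" "y^2 \<le> 8*energy p \<alpha> \<mu> x y"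
proof -
  have a: "0 \<le> \<alpha>/(real p+1) * x^(p+1)" using assms even_pow_nonneg[OF assms(3), of x] by simp
  have b: "0 \<le> (y + \<mu>*x/2)^2" by simp
  have c: "0 \<le> \<mu>^2*x^2/8" by simp
  show "0 \<le> energy p \<alpha> \<mu> x y" "\<mu>^2*x^2/8 \<le> energy p \<alpha> \<mu> x y"
    using a b c unfolding energy_alt by linarith+
  have "y^2 \<le> 8*((y + \<mu>*x/2)^2/2 + \<mu>^2*x^2/8)"
  proof -
    have "8*((y + \<mu>*x/2)^2/2 + \<mu>^2*x^2/8) - y^2 = 2*(y+\<mu>*x)^2 + y^2"
      by (simp add: power2_eq_square algebra_simps)
    then show ?thesis using zero_le_power2[of "y+\<mu>*x"] zero_le_power2[of y] by linarith
  qed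
  then show "y^2 \<le> 8*energy p \<alpha> \<mu> x y" using a unfolding energy_alt by (simp add: distrib_left)
qed

lemma energy_upper:
  fixes x y :: real
  assumes "\<alpha> > 0" "\<mu> > 0" "even (p+1)"
  shows "energy p \<alpha> \<mu> x y \<le> y^2 + \<mu>^2*x^2 + \<alpha> * x^(p+1)"
proof -
  have a: "\<alpha>/(real p+1) * x^(p+1) \<le> \<alpha> * x^(p+1)"
    using assms even_pow_nonneg[OF assms(3), of x]
    by (intro mult_right_mono) (auto simp: divide_le_eq)
  have b: "\<mu>/2*x*y \<le> y^2/2 + \<mu>^2*x^2/8"
  proof -
    have "0 \<le> (y - \<mu>*x/2)^2" by simp
    then show ?thesis by (simp add: power2_eq_square algebra_simps)
  qed
  have c: "0 \<le> \<mu>^2*x^2" by simp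
  show ?thesis using a b c unfolding energy_def by linarith
qed

lemma key_ineq:
  fixes x y B \<alpha> \<mu> :: real and k p :: nat
  assumes "\<alpha> > 0" "\<mu> > 0" "p = 2*k+1" "x^2 \<le> B" "y^2 \<le> B"
  defines "M \<equiv> 1 + \<mu>^2 + \<alpha>*B^k"
  defines "c \<equiv> \<mu>/2 * min 1 \<alpha> / (M^(k+1) * (B^k+1))"
  shows "c * energy p \<alpha> \<mu> x y ^ (k+1) \<le> \<mu>/2 * (y^2 + \<alpha> * x^(p+1))"
proof -
  define E where "E = energy p \<alpha> \<mu> x y"
  define X where "X = (x^2)^(k+1)"
  have ev: "even (p+1)" using assms(3) by simp
  have B0: "0 \<le> B" using assms(4) zero_le_power2[of x] by linarith
  have Bk: "0 \<le> B^k" using B0 by simp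
  have pk: "p+1 = 2*(k+1)" using assms(3) by simp
  have Xeq: "x^(p+1) = X" unfolding X_def pk by (simp only: power_mult)
  have E0: "0 \<le> E" unfolding E_def using energy_bounds(1)[OF assms(1,2) ev] .
  have Eup: "E \<le> y^2 + \<mu>^2*x^2 + \<alpha>*X" unfolding E_def using energy_upper[OF assms(1,2) ev, of x y] unfolding Xeq .
  have X0: "0 \<le> X" unfolding X_def by simp
  have XB: "X \<le> B^k * x^2"
  proof -
    have "X = (x^2)^k * x^2" unfolding X_def by simp
    also have "\<dots> \<le> B^k * x^2" by (intro mult_right_mono power_mono assms(4)) auto
    finally show ?thesis .
  qed
  define N where "N = max (y^2) (x^2)"
  have N0: "0 \<le> N" unfolding N_def by (simp add: le_max_iff_disj)
  have aBk: "0 \<le> \<alpha>*B^k" using assms(1) Bk by simp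
  have M0: "0 < M" unfolding M_def using aBk zero_le_power2[of \<mu>] by linarith
  have "E \<le> y^2 + \<mu>^2*x^2 + \<alpha>*(B^k*x^2)"
  proof -
    have "\<alpha>*X \<le> \<alpha>*(B^k*x^2)" using XB assms(1) by (intro mult_left_mono) auto
    then show ?thesis using Eup by linarith
  qed
  also have "\<dots> \<le> 1*N + \<mu>^2*N + (\<alpha>*B^k)*N"
  proof -
    have "y^2 \<le> N" "x^2 \<le> N" unfolding N_def by auto
    moreover have "0 \<le> \<mu>^2" "0 \<le> \<alpha>*B^k" using assms(1) Bk by auto
    ultimately have "y^2 \<le> 1*N" "\<mu>^2*x^2 \<le> \<mu>^2*N" "(\<alpha>*B^k)*x^2 \<le> (\<alpha>*B^k)*N"
      by (auto intro: mult_left_mono)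
    then show ?thesis by (simp add: mult.assoc)
  qed
  also have "\<dots> = M*N" unfolding M_def by (simp add: algebra_simps)
  finally have EMN: "E \<le> M*N" .
  have "E^(k+1) \<le> (M*N)^(k+1)" by (intro power_mono EMN E0)
  also have "\<dots> = M^(k+1) * N^(k+1)" by (simp add: power_mult_distrib)
  also have "\<dots> \<le> M^(k+1) * ((B^k+1) * (y^2 + X))"
  proof (intro mult_left_mono)
    show "0 \<le> M^(k+1)" using M0 by simp
    show "N^(k+1) \<le> (B^k+1) * (y^2 + X)"
    proof (cases "y^2 \<le> x^2")
      case True
      then have "N = x^2" unfolding N_def by simp
      then have "N^(k+1) = X" unfolding X_def by simp
      moreover have "X \<le> (B^k+1) * X" using Bk X0 by (simp add: distrib_right)
      moreover have "(B^k+1) * X \<le> (B^k+1) * (y^2 + X)" using Bk by (intro mult_left_mono) auto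
      ultimately show ?thesis by linarith
    next
      case False
      then have "N = y^2" unfolding N_def by simp
      then have "N^(k+1) = (y^2)^k * y^2" by simp
      also have "\<dots> \<le> B^k * y^2" by (intro mult_right_mono power_mono assms(5)) auto
      also have "\<dots> \<le> (B^k+1) * y^2" by (simp add: distrib_right)
      also have "(B^k+1) * y^2 \<le> (B^k+1) * (y^2 + X)" using Bk X0 by (intro mult_left_mono) auto
      finally show ?thesis .
    qed
  qed
  finally have EP: "E^(k+1) \<le> M^(k+1) * (B^k+1) * (y^2 + X)" by (simp add: mult.assoc)
  have Q0: "0 < M^(k+1) * (B^k+1)" using M0 Bk by simp
  have c0: "0 \<le> c" unfolding c_def using assms(1,2) Q0 by simp
  have "c * E^(k+1) \<le> c * (M^(k+1) * (B^k+1) * (y^2 + X))" by (intro mult_left_mono EP c0)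
  also have "\<dots> = \<mu>/2 * (min 1 \<alpha> * y^2 + min 1 \<alpha> * X)" unfolding c_def using Q0 by (simp add: field_simps)
  also have "\<dots> \<le> \<mu>/2 * (y^2 + \<alpha> * X)"
  proof -
    have "min 1 \<alpha> * y^2 \<le> 1 * y^2" by (intro mult_right_mono) auto
    moreover have "min 1 \<alpha> * X \<le> \<alpha> * X" using X0 by (intro mult_right_mono) auto
    ultimately show ?thesis using assms(2) by (intro mult_left_mono) auto
  qed
  finally show ?thesis unfolding E_def Xeq .
qed

lemma energy_deriv:
  fixes x y :: "real \<Rightarrow> real"
  assumes dx: "(x has_real_derivative y t) (at t within S)"
    and dy: "(y has_real_derivative (- \<alpha> * x t ^ p - \<mu> * y t)) (at t within S)"
  shows "((\<lambda>s. energy p \<alpha> \<mu> (x s) (y s)) has_real_derivative (-(\<mu>/2)*(y t^2 + \<alpha>*x t^(p+1)))) (at t within S)"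
proof -
  have d1: "((\<lambda>s. x s^(p+1)) has_real_derivative (real (p+1) * x t^p * y t)) (at t within S)"
    using DERIV_power[OF dx, of "p+1"] by (simp add: mult_ac)
  have d2: "((\<lambda>s. y s^2) has_real_derivative (real 2 * y t * (- \<alpha> * x t ^ p - \<mu> * y t))) (at t within S)"
    using DERIV_power[OF dy, of 2] by (simp add: mult_ac)
  have d3: "((\<lambda>s. x s^2) has_real_derivative (real 2 * x t * y t)) (at t within S)"
    using DERIV_power[OF dx, of 2] by (simp add: mult_ac)
  have d4: "((\<lambda>s. x s * y s) has_real_derivative (y t * y t + x t * (- \<alpha> * x t ^ p - \<mu> * y t))) (at t within S)"
    using DERIV_mult[OF dx dy] by (simp add: mult_ac)
  have "((\<lambda>s. (1/2)*y s^2 + (\<mu>/2)*(x s*y s) + (\<mu>^2/4)*x s^2 + (\<alpha>/(real p+1))*x s^(p+1)) has_real_derivative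
     (1/2)*(real 2 * y t * (- \<alpha> * x t ^ p - \<mu> * y t)) + (\<mu>/2)*(y t * y t + x t * (- \<alpha> * x t ^ p - \<mu> * y t))
     + (\<mu>^2/4)*(real 2 * x t * y t) + (\<alpha>/(real p+1))*(real (p+1) * x t^p * y t)) (at t within S)"
    by (intro DERIV_add DERIV_cmult d1 d2 d3 d4)
  moreover have "(\<lambda>s. (1/2)*y s^2 + (\<mu>/2)*(x s*y s) + (\<mu>^2/4)*x s^2 + (\<alpha>/(real p+1))*x s^(p+1))
     = (\<lambda>s. energy p \<alpha> \<mu> (x s) (y s))" unfolding energy_def by (simp add: algebra_simps)
  moreover have "(1/2)*(real 2 * y t * (- \<alpha> * x t ^ p - \<mu> * y t)) + (\<mu>/2)*(y t * y t + x t * (- \<alpha> * x t ^ p - \<mu> * y t))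
     + (\<mu>^2/4)*(real 2 * x t * y t) + (\<alpha>/(real p+1))*(real (p+1) * x t^p * y t)
     = -(\<mu>/2)*(y t^2 + \<alpha>*x t^(p+1))"
  proof -
    have "(\<alpha>/(real p+1))*(real (p+1) * x t^p * y t) = \<alpha> * x t^p * y t" by (simp add: field_simps)
    then show ?thesis by (simp add: power2_eq_square algebra_simps)
  qed
  ultimately show ?thesis by simp
qed

theorem proposition2:
  fixes p :: nat and \<alpha> \<mu> x0 y0 :: real and x y :: "real \<Rightarrow> real"
  assumes "odd p" and "p \<ge> 3" and "\<mu> > 0" and "\<alpha> > 0"
    and "\<And>t. t \<ge> 0 \<Longrightarrow> (x has_real_derivative y t) (at t within {0..})"
    and "\<And>t. t \<ge> 0 \<Longrightarrow> (y has_real_derivative (- \<alpha> * x t ^ p - \<mu> * y t)) (at t within {0..})"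
    and "x 0 = x0" and "y 0 = y0"
  shows "\<exists>C > 0. \<forall>t > 0. energy p \<alpha> \<mu> (x t) (y t) \<le> C * t powr (- 2 / (real p - 1))"
proof -
  obtain k where pk: "p = 2*k+1" using assms(1) oddE by blast
  have k1: "k \<ge> 1" using assms(2) pk by simp
  have ev: "even (p+1)" using pk by simp
  define E where "E = (\<lambda>s. energy p \<alpha> \<mu> (x s) (y s))"
  define D where "D = (\<lambda>s. -(\<mu>/2)*(y s^2 + \<alpha>*x s^(p+1)))"
  have dE: "(E has_real_derivative D t) (at t within {0..})" if "t \<ge> 0" for t
    unfolding E_def D_def using energy_deriv[OF assms(5)[OF that] assms(6)[OF that]] .
  have dEat: "(E has_real_derivative D t) (at t)" if "t > 0" for t
  proof -
    have "t \<in> interior {0..}" using that by simp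
    then show ?thesis using dE[of t] that at_within_interior by fastforce
  qed
  have contE: "continuous_on {0..} E"
    using dE DERIV_continuous continuous_on_eq_continuous_within by fastforce
  have D0: "D t \<le> 0" for t
  proof -
    have "0 \<le> x t^(p+1)" using ev by (rule zero_le_even_power)
    then show ?thesis unfolding D_def using assms(3,4) by (simp add: mult_nonneg_nonneg)
  qed
  have dec: "E b \<le> E a" if "0 \<le> a" "a \<le> b" for a b
  proof (rule DERIV_nonpos_imp_decreasing_open[OF that(2)])
    fix s assume "a < s" "s < b"
    then show "\<exists>y. (E has_real_derivative y) (at s) \<and> y \<le> 0"
      using dEat D0 that by (intro exI[of _ "D s"]) auto
  next
    show "continuous_on {a..b} E" using that by (intro continuous_on_subset[OF contE]) auto
  qed
  define B where "B = 8*E 0/\<mu>^2 + 8*E 0"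
  have Enn: "0 \<le> E s" for s unfolding E_def using energy_bounds(1)[OF assms(4,3) ev] .
  have xB: "x s^2 \<le> B" and yB: "y s^2 \<le> B" if "s \<ge> 0" for s
  proof -
    have e: "E s \<le> E 0" using dec that by simp
    have h1: "\<mu>^2*x s^2/8 \<le> E s" unfolding E_def using energy_bounds(2)[OF assms(4,3) ev] .
    have h2: "y s^2 \<le> 8*E s" unfolding E_def using energy_bounds(3)[OF assms(4,3) ev] .
    have "x s^2 \<le> 8*E 0/\<mu>^2" using h1 e assms(3) by (simp add: field_simps)
    moreover have "0 \<le> 8*E 0/\<mu>^2" using Enn[of 0] by simp
    ultimately show "x s^2 \<le> B" "y s^2 \<le> B" unfolding B_def using h2 e Enn[of 0] by linarith+
  qed
  define M where "M = 1 + \<mu>^2 + \<alpha>*B^k"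
  define c where "c = \<mu>/2 * min 1 \<alpha> / (M^(k+1) * (B^k+1))"
  have B0: "0 \<le> B" using xB[of 0] zero_le_power2[of "x 0"] by linarith
  have c0: "c > 0"
  proof -
    have "0 \<le> \<alpha>*B^k" using assms(4) B0 by simp
    then have "0 < M" unfolding M_def using zero_le_power2[of \<mu>] by linarith
    moreover have "0 < B^k + 1" using B0 by (simp add: add_nonneg_pos)
    ultimately show ?thesis unfolding c_def using assms(3,4) by simp
  qed
  have key: "c * E s ^ (k+1) \<le> - D s" if "s \<ge> 0" for s
    using key_ineq[OF assms(4,3) pk xB[OF that] yB[OF that]] unfolding E_def D_def M_def c_def by simp
  define C where "C = (real k * c) powr (- 1 / real k)"
  have C0: "C > 0" unfolding C_def using c0 k1 by simp
  have expo: "- 2 / (real p - 1) = - 1 / real k" using pk k1 by (simp add: field_simps)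
  show ?thesis
  proof (intro exI[of _ C] conjI allI impI C0)
    fix t :: real assume t0: "t > 0"
    show "energy p \<alpha> \<mu> (x t) (y t) \<le> C * t powr (- 2 / (real p - 1))"
    proof (cases "E t > 0")
      case False
      then have "E t \<le> 0" by simp
      moreover have "0 < C * t powr (- 2 / (real p - 1))" using C0 t0 by simp
      ultimately show ?thesis unfolding E_def by simp
    next
      case True
      have Epos: "E s > 0" if "0 \<le> s" "s \<le> t" for s using dec[OF that] True by simp
      define H where "H = (\<lambda>s. inverse (E s ^ k) - real k * c * s)"
      have "H 0 \<le> H t"
      proof (rule DERIV_nonneg_imp_increasing_open[of 0 t H])
        show "0 \<le> t" using t0 by simp
        fix s assume s: "0 < s" "s < t"
        have es: "E s > 0" using Epos s by simp
        have "(H has_real_derivative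
            (- (inverse (E s ^ k) * (real k * E s ^ (k - 1) * D s) * inverse (E s ^ k)) - real k * c)) (at s)"
          unfolding H_def using es
          using dEat[OF s(1)] by (intro derivative_eq_intros refl) (auto)
        moreover have "0 \<le> - (inverse (E s ^ k) * (real k * E s ^ (k - 1) * D s) * inverse (E s ^ k)) - real k * c"
        proof -
          have kk: "c * E s ^ (k+1) \<le> - D s" using key s by simp
          have "real k * c = real k * (c * E s^(k+1)) * E s^(k-1) / (E s^k * E s^k)"
          proof -
            have "E s^(k+1) * E s^(k-1) = E s^k * E s^k"
            proof -
              have "k+1 + (k-1) = k + k" using k1 by simp
              then show ?thesis by (metis power_add)
            qed
            then show ?thesis using es by (simp add: field_simps)
          qed
          also have "\<dots> \<le> real k * (- D s) * E s^(k-1) / (E s^k * E s^k)"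
            using kk es by (intro divide_right_mono mult_right_mono mult_left_mono) auto
          finally show ?thesis using es by (simp add: field_simps)
        qed
        ultimately show "\<exists>y. (H has_real_derivative y) (at s) \<and> 0 \<le> y" by blast
      next
        show "continuous_on {0..t} H"
          unfolding H_def
          using Epos by (intro continuous_intros continuous_on_subset[OF contE]) (auto, metis less_irrefl)
      qed
      then have "real k * c * t \<le> inverse (E t ^ k) - inverse (E 0 ^ k)" unfolding H_def by simp
      moreover have "0 < inverse (E 0 ^ k)" using Epos[of 0] t0 by simp
      ultimately have lt: "real k * c * t \<le> inverse (E t ^ k)" by linarith
      have kct: "0 < real k * c * t" using k1 c0 t0 by simp
      have "inverse (inverse (E t ^ k)) \<le> inverse (real k * c * t)"
        using lt kct by (rule le_imp_inverse_le)
      then have "E t ^ k \<le> inverse (real k * c * t)" by simp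
      then have "(E t ^ k) powr (1 / real k) \<le> (inverse (real k * c * t)) powr (1 / real k)"
        using True by (intro powr_mono2) auto
      moreover have "(E t ^ k) powr (1 / real k) = E t"
      proof -
        have "E t ^ k = E t powr (real k)" using True by (simp add: powr_realpow)
        then have "(E t ^ k) powr (1 / real k) = E t powr (real k * (1 / real k))" by (simp add: powr_powr)
        also have "\<dots> = E t" using k1 True by simp
        finally show ?thesis .
      qed
      moreover have "(inverse (real k * c * t)) powr (1 / real k) = C * t powr (- 1 / real k)"
      proof -
        have "(inverse (real k * c * t)) powr (1 / real k) = inverse ((real k * c * t) powr (1 / real k))"
          by (rule inverse_powr)
        also have "\<dots> = (real k * c * t) powr (- (1 / real k))" by (rule powr_minus[symmetric])
        also have "\<dots> = (real k * c) powr (- (1 / real k)) * t powr (- (1 / real k))" by (rule powr_mult)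
        finally show ?thesis unfolding C_def by simp
      qed
      ultimately show ?thesis unfolding expo E_def by simp
    qed
  qed
qed

end
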